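(* Let $\mathcal P$ be a Fitting program over a bilattice $\mathcal B$. Then $Fix^{\mathcal U}_{\mathcal U}\le_k Fix^{\mathcal F}_{\mathcal U}\otimes Fix^{\mathcal T}_{\mathcal U}$.
   Context: A bilattice $\langle\mathcal B,\le_t,\le_k\rangle$ is a nonempty set with two partial orders, each making $\mathcal B$ a lattice with top and bottom. Under $\le_t$, meet and join are $\wedge,\vee$ (infinitary $\bigwedge,\bigvee$), bottom $\mathcal F$, top $\mathcal T$; under $\le_k$, meet and join are $\otimes,\oplus$ (infinitary $\bigotimes,\bigoplus$), bottom $\mathcal U$, top $\mathcal I$. Standing assumptions: $\mathcal B$ is complete for both orders, infinitely distributive, satisfies the infinitary interlacing conditions, and has a negation $\neg$ (an involution reversing $\le_t$ and preserving $\le_k$). A formula is built from literals ($A$ or $\neg A$) and elements of $\mathcal B$ using $\wedge,\vee,\otimes,\oplus,\exists,\forall$ (with built-in predicate $equal$). A clause is $P(x_1,\dots,x_n)\leftarrow\phi(x_1,\dots,x_n)$ with the body's free variables among $x_1,\dots,x_n$. A Fitting program is a finite set of clauses with no predicate letter heading more than one clause; Inst-$\mathcal P$ is its set of ground instances. $\mathcal V(\mathcal B)$: maps from ground atoms to $\mathcal B$ with pointwise orders/operations. Valuations extend to closed formulas compositionally ($v(\beta)=\beta$, connectives pointwise, $\exists$ as $\bigvee$, $\forall$ as $\bigwedge$ over closed-term instances, $v(equal(s,t))=\mathcal T$ if $s=t$ else $\mathcal F$). The contrajoin $v\bigtriangleup w$ evaluates likewise but gives $A$ the value $v(A)$ and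 $\neg A$ the value $\neg w(A)$. For $\alpha\in\{\mathcal F,\mathcal T,\mathcal U,\mathcal I\}$: $\Psi_{\mathcal P}^{\alpha}(v,w)(A)=\alpha$ if $A$ heads no member of Inst-$\mathcal P$, and $=(v\bigtriangleup w)(B)$ if $A\leftarrow B\in$ Inst-$\mathcal P$. $\Psi'^{\alpha}_{\mathcal P}(v)$ is the $\le_t$-least (resp. $\le_t$-greatest, $\le_k$-least, $\le_k$-greatest) fixpoint of $x\mapsto\Psi_{\mathcal P}^{\alpha}(x,v)$ when $\alpha=\mathcal F$ (resp. $\mathcal T,\mathcal U,\mathcal I$), obtained as the limit of the transfinite iteration from the constant valuation $\alpha$. $Fix^{\alpha}_{\mathcal U}$ denotes the $\le_k$-least fixpoint of $\Psi'^{\alpha}_{\mathcal P}$. *)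

theory Defs
  imports Main
begin

record 'b bilattice =
  tle :: "'b \<Rightarrow> 'b \<Rightarrow> bool"
  kle :: "'b \<Rightarrow> 'b \<Rightarrow> bool"
  bneg :: "'b \<Rightarrow> 'b"

definition is_lub :: "('a \<Rightarrow> 'a \<Rightarrow> bool) \<Rightarrow> 'a set \<Rightarrow> 'a \<Rightarrow> bool" where
  "is_lub le A x \<longleftrightarrow> (\<forall>a\<in>A. le a x) \<and> (\<forall>y. (\<forall>a\<in>A. le a y) \<longrightarrow> le x y)"

definition is_glb :: "('a \<Rightarrow> 'a \<Rightarrow> bool) \<Rightarrow> 'a set \<Rightarrow> 'a \<Rightarrow> bool" where
  "is_glb le A x \<longleftrightarrow> (\<forall>a\<in>A. le x a) \<and> (\<forall>y. (\<forall>a\<in>A. le y a) \<longrightarrow> le y x)"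

definition lub :: "('a \<Rightarrow> 'a \<Rightarrow> bool) \<Rightarrow> 'a set \<Rightarrow> 'a" where
  "lub le A = (THE x. is_lub le A x)"

definition glb :: "('a \<Rightarrow> 'a \<Rightarrow> bool) \<Rightarrow> 'a set \<Rightarrow> 'a" where
  "glb le A = (THE x. is_glb le A x)"

definition partial_order_rel :: "('a \<Rightarrow> 'a \<Rightarrow> bool) \<Rightarrow> bool" where
  "partial_order_rel le \<longleftrightarrow> (\<forall>x. le x x) \<and> (\<forall>x y. le x y \<and> le y x \<longrightarrow> x = y)
      \<and> (\<forall>x y z. le x y \<and> le y z \<longrightarrow> le x z)"

definition complete_lattice_rel :: "('a \<Rightarrow> 'a \<Rightarrow> bool) \<Rightarrow> bool" where
  "complete_lattice_rel le \<longleftrightarrow> partial_order_rel le \<and>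
      (\<forall>A. (\<exists>x. is_lub le A x) \<and> (\<exists>x. is_glb le A x))"

definition tMeet :: "'b bilattice \<Rightarrow> 'b set \<Rightarrow> 'b" where "tMeet B A = glb (tle B) A"
definition tJoin :: "'b bilattice \<Rightarrow> 'b set \<Rightarrow> 'b" where "tJoin B A = lub (tle B) A"
definition kMeet :: "'b bilattice \<Rightarrow> 'b set \<Rightarrow> 'b" where "kMeet B A = glb (kle B) A"
definition kJoin :: "'b bilattice \<Rightarrow> 'b set \<Rightarrow> 'b" where "kJoin B A = lub (kle B) A"

definition tmeet :: "'b bilattice \<Rightarrow> 'b \<Rightarrow> 'b \<Rightarrow> 'b" where "tmeet B a b = tMeet B {a, b}"
definition tjoin :: "'b bilattice \<Rightarrow> 'b \<Rightarrow> 'b \<Rightarrow> 'b" where "tjoin B a b = tJoin B {a, b}"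
definition kmeet :: "'b bilattice \<Rightarrow> 'b \<Rightarrow> 'b \<Rightarrow> 'b" where "kmeet B a b = kMeet B {a, b}"
definition kjoin :: "'b bilattice \<Rightarrow> 'b \<Rightarrow> 'b \<Rightarrow> 'b" where "kjoin B a b = kJoin B {a, b}"

definition bF :: "'b bilattice \<Rightarrow> 'b" where "bF B = tJoin B {}"
definition bT :: "'b bilattice \<Rightarrow> 'b" where "bT B = tMeet B {}"
definition bU :: "'b bilattice \<Rightarrow> 'b" where "bU B = kJoin B {}"
definition bI :: "'b bilattice \<Rightarrow> 'b" where "bI B = kMeet B {}"

text \<open>Infinitary distributivity of a binary operation over an infinitary one
  (for nonempty families; the finitary laws are the two-element instances).\<close>
definition distrib_over :: "('b \<Rightarrow> 'b \<Rightarrow> 'b) \<Rightarrow> ('b set \<Rightarrow> 'b) \<Rightarrow> bool" where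
  "distrib_over f G \<longleftrightarrow> (\<forall>a A. A \<noteq> {} \<longrightarrow> f a (G A) = G (f a ` A))"

definition infinitely_distributive :: "'b bilattice \<Rightarrow> bool" where
  "infinitely_distributive B \<longleftrightarrow>
     distrib_over (tmeet B) (tJoin B) \<and> distrib_over (tmeet B) (kMeet B) \<and> distrib_over (tmeet B) (kJoin B) \<and>
     distrib_over (tjoin B) (tMeet B) \<and> distrib_over (tjoin B) (kMeet B) \<and> distrib_over (tjoin B) (kJoin B) \<and>
     distrib_over (kmeet B) (tMeet B) \<and> distrib_over (kmeet B) (tJoin B) \<and> distrib_over (kmeet B) (kJoin B) \<and>
     distrib_over (kjoin B) (tMeet B) \<and> distrib_over (kjoin B) (tJoin B) \<and> distrib_over (kjoin B) (kMeet B)"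

text \<open>Monotonicity of an infinitary operation w.r.t. an order, for arbitrary families
  (a family of pairs (a_i, b_i) is represented by the set R of the pairs).\<close>
definition mono_fam :: "('b \<Rightarrow> 'b \<Rightarrow> bool) \<Rightarrow> ('b set \<Rightarrow> 'b) \<Rightarrow> bool" where
  "mono_fam le G \<longleftrightarrow> (\<forall>R. (\<forall>(x, y)\<in>R. le x y) \<longrightarrow> le (G (fst ` R)) (G (snd ` R)))"

definition infinitely_interlaced :: "'b bilattice \<Rightarrow> bool" where
  "infinitely_interlaced B \<longleftrightarrow>
     mono_fam (tle B) (tMeet B) \<and> mono_fam (tle B) (tJoin B) \<and>
     mono_fam (tle B) (kMeet B) \<and> mono_fam (tle B) (kJoin B) \<and>
     mono_fam (kle B) (tMeet B) \<and> mono_fam (kle B) (tJoin B) \<and>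
     mono_fam (kle B) (kMeet B) \<and> mono_fam (kle B) (kJoin B)"

definition is_negation :: "'b bilattice \<Rightarrow> bool" where
  "is_negation B \<longleftrightarrow> (\<forall>a. bneg B (bneg B a) = a) \<and>
     (\<forall>a b. tle B a b \<longrightarrow> tle B (bneg B b) (bneg B a)) \<and>
     (\<forall>a b. kle B a b \<longrightarrow> kle B (bneg B a) (bneg B b))"

definition std_bilattice :: "'b bilattice \<Rightarrow> bool" where
  "std_bilattice B \<longleftrightarrow> complete_lattice_rel (tle B) \<and> complete_lattice_rel (kle B) \<and>
     infinitely_distributive B \<and> infinitely_interlaced B \<and> is_negation B"

datatype 'f trm = Var nat | Fn 'f "'f trm list"

fun closed_trm :: "'f trm \<Rightarrow> bool" where
  "closed_trm (Var n) = False"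
| "closed_trm (Fn f ts) = (\<forall>t\<in>set ts. closed_trm t)"

fun tsubst :: "(nat \<Rightarrow> 'f trm) \<Rightarrow> 'f trm \<Rightarrow> 'f trm" where
  "tsubst e (Var n) = e n"
| "tsubst e (Fn f ts) = Fn f (map (tsubst e) ts)"

fun tvars :: "'f trm \<Rightarrow> nat set" where
  "tvars (Var n) = {n}"
| "tvars (Fn f ts) = (\<Union>t\<in>set ts. tvars t)"

datatype ('p, 'f, 'b) fm =
    PosLit 'p "'f trm list"
  | NegLit 'p "'f trm list"
  | PosEq "'f trm" "'f trm"
  | NegEq "'f trm" "'f trm"
  | Cst 'b
  | Conj "('p, 'f, 'b) fm" "('p, 'f, 'b) fm"
  | Disj "('p, 'f, 'b) fm" "('p, 'f, 'b) fm"
  | KMeetF "('p, 'f, 'b) fm" "('p, 'f, 'b) fm"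
  | KJoinF "('p, 'f, 'b) fm" "('p, 'f, 'b) fm"
  | Ex nat "('p, 'f, 'b) fm"
  | All nat "('p, 'f, 'b) fm"

fun fv :: "('p, 'f, 'b) fm \<Rightarrow> nat set" where
  "fv (PosLit p ts) = (\<Union>t\<in>set ts. tvars t)"
| "fv (NegLit p ts) = (\<Union>t\<in>set ts. tvars t)"
| "fv (PosEq s t) = tvars s \<union> tvars t"
| "fv (NegEq s t) = tvars s \<union> tvars t"
| "fv (Cst b) = {}"
| "fv (Conj a b) = fv a \<union> fv b"
| "fv (Disj a b) = fv a \<union> fv b"
| "fv (KMeetF a b) = fv a \<union> fv b"
| "fv (KJoinF a b) = fv a \<union> fv b"
| "fv (Ex x a) = fv a - {x}"
| "fv (All x a) = fv a - {x}"

text \<open>Ground atoms are pairs (P, ts) with ts closed; valuations are maps from atoms to 'b.\<close>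
type_synonym ('p, 'f, 'b) valuation = "('p \<times> 'f trm list) \<Rightarrow> 'b"

text \<open>For closed formulas this is
  (v \<triangle> w)(\<phi>); for a formula with free variables it evaluates the corresponding instance.\<close>
fun ceval :: "'b bilattice \<Rightarrow> ('p, 'f, 'b) valuation \<Rightarrow> ('p, 'f, 'b) valuation
              \<Rightarrow> (nat \<Rightarrow> 'f trm) \<Rightarrow> ('p, 'f, 'b) fm \<Rightarrow> 'b" where
  "ceval B v w e (PosLit p ts) = v (p, map (tsubst e) ts)"
| "ceval B v w e (NegLit p ts) = bneg B (w (p, map (tsubst e) ts))"
| "ceval B v w e (PosEq s t) = (if tsubst e s = tsubst e t then bT B else bF B)"
| "ceval B v w e (NegEq s t) = bneg B (if tsubst e s = tsubst e t then bT B else bF B)"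
| "ceval B v w e (Cst b) = b"
| "ceval B v w e (Conj a b) = tmeet B (ceval B v w e a) (ceval B v w e b)"
| "ceval B v w e (Disj a b) = tjoin B (ceval B v w e a) (ceval B v w e b)"
| "ceval B v w e (KMeetF a b) = kmeet B (ceval B v w e a) (ceval B v w e b)"
| "ceval B v w e (KJoinF a b) = kjoin B (ceval B v w e a) (ceval B v w e b)"
| "ceval B v w e (Ex x a) = tJoin B {ceval B v w (e(x := t)) a | t. closed_trm t}"
| "ceval B v w e (All x a) = tMeet B {ceval B v w (e(x := t)) a | t. closed_trm t}"

text \<open>A clause P(x1,...,xn) \<leftarrow> \<phi> is a triple (P, [x1,...,xn], \<phi>).\<close>
type_synonym ('p, 'f, 'b) clause = "'p \<times> nat list \<times> ('p, 'f, 'b) fm"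

definition fitting_program :: "('p, 'f, 'b) clause set \<Rightarrow> bool" where
  "fitting_program P \<longleftrightarrow> finite P \<and>
     (\<forall>(p, xs, \<phi>)\<in>P. distinct xs \<and> fv \<phi> \<subseteq> set xs) \<and>
     (\<forall>c1\<in>P. \<forall>c2\<in>P. fst c1 = fst c2 \<longrightarrow> c1 = c2)"

definition closed_env :: "(nat \<Rightarrow> 'f trm) \<Rightarrow> bool" where
  "closed_env e \<longleftrightarrow> (\<forall>n. closed_trm (e n))"

definition heads_instance :: "('p, 'f, 'b) clause set \<Rightarrow> ('p \<times> 'f trm list)
      \<Rightarrow> ('p, 'f, 'b) clause \<Rightarrow> (nat \<Rightarrow> 'f trm) \<Rightarrow> bool" where
  "heads_instance P A c e \<longleftrightarrow> c \<in> P \<and> closed_env e \<and> A = (fst c, map e (fst (snd c)))"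

datatype tval = CF | CT | CU | CI

definition tval_of :: "'b bilattice \<Rightarrow> tval \<Rightarrow> 'b" where
  "tval_of B \<alpha> = (case \<alpha> of CF \<Rightarrow> bF B | CT \<Rightarrow> bT B | CU \<Rightarrow> bU B | CI \<Rightarrow> bI B)"

definition Psi :: "'b bilattice \<Rightarrow> ('p, 'f, 'b) clause set \<Rightarrow> tval
      \<Rightarrow> ('p, 'f, 'b) valuation \<Rightarrow> ('p, 'f, 'b) valuation \<Rightarrow> ('p, 'f, 'b) valuation" where
  "Psi B P \<alpha> v w A =
     (if \<exists>c e. heads_instance P A c e
      then (let (c, e) = (SOME (c, e). heads_instance P A c e) in ceval B v w e (snd (snd c)))
      else tval_of B \<alpha>)"

definition vle :: "('b \<Rightarrow> 'b \<Rightarrow> bool) \<Rightarrow> ('a \<Rightarrow> 'b) \<Rightarrow> ('a \<Rightarrow> 'b) \<Rightarrow> bool" where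
  "vle le v w \<longleftrightarrow> (\<forall>A. le (v A) (w A))"

definition least_fp :: "('a \<Rightarrow> 'a \<Rightarrow> bool) \<Rightarrow> ('a \<Rightarrow> 'a) \<Rightarrow> 'a" where
  "least_fp le f = (THE x. f x = x \<and> (\<forall>y. f y = y \<longrightarrow> le x y))"

definition greatest_fp :: "('a \<Rightarrow> 'a \<Rightarrow> bool) \<Rightarrow> ('a \<Rightarrow> 'a) \<Rightarrow> 'a" where
  "greatest_fp le f = (THE x. f x = x \<and> (\<forall>y. f y = y \<longrightarrow> le y x))"

definition Psi' :: "'b bilattice \<Rightarrow> ('p, 'f, 'b) clause set \<Rightarrow> tval
      \<Rightarrow> ('p, 'f, 'b) valuation \<Rightarrow> ('p, 'f, 'b) valuation" where
  "Psi' B P \<alpha> v = (case \<alpha> of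
       CF \<Rightarrow> least_fp (vle (tle B)) (\<lambda>x. Psi B P CF x v)
     | CT \<Rightarrow> greatest_fp (vle (tle B)) (\<lambda>x. Psi B P CT x v)
     | CU \<Rightarrow> least_fp (vle (kle B)) (\<lambda>x. Psi B P CU x v)
     | CI \<Rightarrow> greatest_fp (vle (kle B)) (\<lambda>x. Psi B P CI x v))"

definition FixU :: "'b bilattice \<Rightarrow> ('p, 'f, 'b) clause set \<Rightarrow> tval \<Rightarrow> ('p, 'f, 'b) valuation" where
  "FixU B P \<alpha> = least_fp (vle (kle B)) (Psi' B P \<alpha>)"

end

theory Submission
  imports Defs
begin

inductive_set cp :: "('a \<Rightarrow> 'a) \<Rightarrow> ('a \<Rightarrow> 'a) \<Rightarrow> ('a set \<Rightarrow> 'a) \<Rightarrow> ('a \<times> 'a) set"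
  for f g L where
  step: "p \<in> cp f g L \<Longrightarrow> (f (fst p), g (snd p)) \<in> cp f g L"
| lim: "\<forall>p\<in>R. p \<in> cp f g L \<Longrightarrow> (L (fst ` R), L (snd ` R)) \<in> cp f g L"

lemma po_refl: "partial_order_rel le \<Longrightarrow> le x x"
  unfolding partial_order_rel_def by blast
lemma po_antisym: "partial_order_rel le \<Longrightarrow> le x y \<Longrightarrow> le y x \<Longrightarrow> x = y"
  unfolding partial_order_rel_def by blast
lemma po_trans: "partial_order_rel le \<Longrightarrow> le x y \<Longrightarrow> le y z \<Longrightarrow> le x z"
  unfolding partial_order_rel_def by blast

lemma least_fp_eq:
  assumes po: "partial_order_rel le" and fa: "f a = a" and lst: "\<And>z. le (f z) z \<Longrightarrow> le a z"
  shows "least_fp le f = a"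
  unfolding least_fp_def
proof (rule the_equality)
  show "f a = a \<and> (\<forall>y. f y = y \<longrightarrow> le a y)" using fa lst po_refl[OF po] by metis
next
  fix x assume x: "f x = x \<and> (\<forall>y. f y = y \<longrightarrow> le x y)"
  then have "le x a" using fa by blast
  moreover have "le a x" using lst x po_refl[OF po] by metis
  ultimately show "x = a" using po_antisym[OF po] by blast
qed

lemma lfp_gen:
  fixes le k :: "'a \<Rightarrow> 'a \<Rightarrow> bool" and L :: "'a set \<Rightarrow> 'a"
  assumes po: "partial_order_rel le"
    and lub: "\<And>S. is_lub le S (L S)"
    and mf: "\<And>x y. le x y \<Longrightarrow> le (f x) (f y)"
    and mg: "\<And>x y. le x y \<Longrightarrow> le (g x) (g y)"
    and fg: "\<And>x y. k x y \<Longrightarrow> k (f x) (g y)"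
    and kL: "\<And>R. \<forall>p\<in>R. k (fst p) (snd p) \<Longrightarrow> k (L (fst ` R)) (L (snd ` R))"
  shows "f (least_fp le f) = least_fp le f \<and> (\<forall>z. le (f z) z \<longrightarrow> le (least_fp le f) z)
    \<and> g (least_fp le g) = least_fp le g \<and> (\<forall>z. le (g z) z \<longrightarrow> le (least_fp le g) z)
    \<and> k (least_fp le f) (least_fp le g)"
proof -
  have ub: "\<And>S x. x \<in> S \<Longrightarrow> le x (L S)" using lub unfolding is_lub_def by blast
  have lu: "\<And>S y. (\<And>x. x \<in> S \<Longrightarrow> le x y) \<Longrightarrow> le (L S) y" using lub unfolding is_lub_def by blast
  have inv: "le (fst p) (f (fst p)) \<and> le (snd p) (g (snd p)) \<and>
      (\<forall>z. le (f z) z \<longrightarrow> le (fst p) z) \<and> (\<forall>z. le (g z) z \<longrightarrow> le (snd p) z) \<and>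
      k (fst p) (snd p)" if "p \<in> cp f g L" for p
    using that
  proof (induction rule: cp.induct)
    case (step p)
    obtain x y where p: "p = (x, y)" by (cases p)
    have h: "le x (f x)" "le y (g y)" "\<forall>z. le (f z) z \<longrightarrow> le x z"
      "\<forall>z. le (g z) z \<longrightarrow> le y z" "k x y" using step.IH unfolding p by simp_all
    have c1: "le (f x) (f (f x))" using mf h(1) .
    have c2: "le (g y) (g (g y))" using mg h(2) .
    have c3: "\<forall>z. le (f z) z \<longrightarrow> le (f x) z"
    proof (intro allI impI)
      fix z assume "le (f z) z"
      then have "le x z" using h(3) by blast
      then have "le (f x) (f z)" by (rule mf)
      then show "le (f x) z" using po_trans[OF po] \<open>le (f z) z\<close> by blast
    qed
    have c4: "\<forall>z. le (g z) z \<longrightarrow> le (g y) z"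
    proof (intro allI impI)
      fix z assume "le (g z) z"
      then have "le y z" using h(4) by blast
      then have "le (g y) (g z)" by (rule mg)
      then show "le (g y) z" using po_trans[OF po] \<open>le (g z) z\<close> by blast
    qed
    have c5: "k (f x) (g y)" using fg h(5) .
    show ?case unfolding p using c1 c2 c3 c4 c5 by simp
  next
    case (lim R)
    have H: "\<And>p. p \<in> R \<Longrightarrow> le (fst p) (f (fst p)) \<and> le (snd p) (g (snd p)) \<and>
      (\<forall>z. le (f z) z \<longrightarrow> le (fst p) z) \<and> (\<forall>z. le (g z) z \<longrightarrow> le (snd p) z) \<and>
      k (fst p) (snd p)"
    proof -
      fix p assume "p \<in> R"
      with lim.IH have "p \<in> cp f g L \<and> ?thesis p" by (rule bspec)
      then show "?thesis p" by (rule conjunct2)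
    qed
    have a1: "le (L (fst ` R)) (f (L (fst ` R)))"
    proof (rule lu)
      fix x assume x: "x \<in> fst ` R"
      then obtain p where p: "p \<in> R" "x = fst p" by blast
      have "le x (f x)" using H[OF p(1)] p(2) by simp
      moreover have "le (f x) (f (L (fst ` R)))" by (rule mf, rule ub, rule x)
      ultimately show "le x (f (L (fst ` R)))" by (rule po_trans[OF po])
    qed
    have a2: "le (L (snd ` R)) (g (L (snd ` R)))"
    proof (rule lu)
      fix x assume x: "x \<in> snd ` R"
      then obtain p where p: "p \<in> R" "x = snd p" by blast
      have "le x (g x)" using H[OF p(1)] p(2) by simp
      moreover have "le (g x) (g (L (snd ` R)))" by (rule mg, rule ub, rule x)
      ultimately show "le x (g (L (snd ` R)))" by (rule po_trans[OF po])
    qed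
    have a3: "\<forall>z. le (f z) z \<longrightarrow> le (L (fst ` R)) z"
    proof (intro allI impI)
      fix z assume z: "le (f z) z"
      show "le (L (fst ` R)) z"
      proof (rule lu)
        fix x assume "x \<in> fst ` R"
        then obtain p where p: "p \<in> R" "x = fst p" by blast
        show "le x z" using H[OF p(1)] p(2) z by simp
      qed
    qed
    have a4: "\<forall>z. le (g z) z \<longrightarrow> le (L (snd ` R)) z"
    proof (intro allI impI)
      fix z assume z: "le (g z) z"
      show "le (L (snd ` R)) z"
      proof (rule lu)
        fix x assume "x \<in> snd ` R"
        then obtain p where p: "p \<in> R" "x = snd p" by blast
        show "le x z" using H[OF p(1)] p(2) z by simp
      qed
    qed
    have a5: "k (L (fst ` R)) (L (snd ` R))" by (rule kL) (use H in blast)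
    show ?case using a1 a2 a3 a4 a5 by simp
  qed
  define C where "C = cp f g L"
  define a where "a = L (fst ` C)"
  define b where "b = L (snd ` C)"
  have abC: "(a, b) \<in> C" unfolding a_def b_def C_def by (rule cp.lim) blast
  then have "(f a, g b) \<in> C" unfolding C_def using cp.step by fastforce
  then have "f a \<in> fst ` C" "g b \<in> snd ` C" by force+
  then have fa1: "le (f a) a" "le (g b) b" unfolding a_def b_def using ub by blast+
  have I: "le a (f a)" "le b (g b)" "\<forall>z. le (f z) z \<longrightarrow> le a z" "\<forall>z. le (g z) z \<longrightarrow> le b z" "k a b"
    using inv[of "(a,b)"] abC unfolding C_def by simp_all
  have fa: "f a = a" using po_antisym[OF po] fa1 I by blast
  have gb: "g b = b" using po_antisym[OF po] fa1 I by blast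
  have "least_fp le f = a" by (rule least_fp_eq[where f=f and a=a, OF po fa]) (use I in blast)
  moreover have "least_fp le g = b" by (rule least_fp_eq[where f=g and a=b, OF po gb]) (use I in blast)
  ultimately show ?thesis using fa gb I by simp
qed


lemma complete_lub: "complete_lattice_rel le \<Longrightarrow> is_lub le S (lub le S)"
proof -
  assume c: "complete_lattice_rel le"
  then have po: "partial_order_rel le" and ex: "\<exists>x. is_lub le S x"
    unfolding complete_lattice_rel_def by blast+
  then obtain x where x: "is_lub le S x" by blast
  have "\<And>y. is_lub le S y \<Longrightarrow> y = x"
    using x po_antisym[OF po] unfolding is_lub_def by blast
  then show ?thesis unfolding lub_def using x by (metis theI)
qed

lemma complete_glb: "complete_lattice_rel le \<Longrightarrow> is_glb le S (glb le S)"
proof -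
  assume c: "complete_lattice_rel le"
  then have po: "partial_order_rel le" and ex: "\<exists>x. is_glb le S x"
    unfolding complete_lattice_rel_def by blast+
  then obtain x where x: "is_glb le S x" by blast
  have "\<And>y. is_glb le S y \<Longrightarrow> y = x"
    using x po_antisym[OF po] unfolding is_glb_def by blast
  then show ?thesis unfolding glb_def using x by (metis theI)
qed

definition vL :: "('b set \<Rightarrow> 'b) \<Rightarrow> ('a \<Rightarrow> 'b) set \<Rightarrow> ('a \<Rightarrow> 'b)" where
  "vL G S = (\<lambda>A. G ((\<lambda>v. v A) ` S))"

lemma vpo: "partial_order_rel le \<Longrightarrow> partial_order_rel (vle le)"
  unfolding partial_order_rel_def vle_def by (metis ext)

lemma vpo_flip: "partial_order_rel le \<Longrightarrow> partial_order_rel (\<lambda>x y. le y x)"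
  unfolding partial_order_rel_def by metis

lemma vlub: "complete_lattice_rel le \<Longrightarrow> is_lub (vle le) S (vL (lub le) S)"
  using complete_lub[of le] unfolding is_lub_def vle_def vL_def by fastforce

lemma vglb: "complete_lattice_rel le \<Longrightarrow> is_lub (\<lambda>x y. vle le y x) S (vL (glb le) S)"
  using complete_glb[of le] unfolding is_lub_def is_glb_def vle_def vL_def by fastforce

lemma vkL: "mono_fam le G \<Longrightarrow> \<forall>p\<in>R. vle le (fst p) (snd p) \<Longrightarrow> vle le (vL G (fst ` R)) (vL G (snd ` R))"
  unfolding vle_def vL_def
proof
  fix A assume m: "mono_fam le G" and R: "\<forall>p\<in>R. \<forall>A. le (fst p A) (snd p A)"
  define R' where "R' = (\<lambda>p. (fst p A, snd p A)) ` R"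
  have "\<forall>(x, y)\<in>R'. le x y" using R unfolding R'_def by auto
  then have "le (G (fst ` R')) (G (snd ` R'))" using m unfolding mono_fam_def by blast
  moreover have "fst ` R' = (\<lambda>v. v A) ` fst ` R" "snd ` R' = (\<lambda>v. v A) ` snd ` R"
    unfolding R'_def by (simp_all add: image_image)
  ultimately show "le (G ((\<lambda>v. v A) ` fst ` R)) (G ((\<lambda>v. v A) ` snd ` R))" by simp
qed

lemma mono2: "mono_fam le G \<Longrightarrow> le a a' \<Longrightarrow> le b b' \<Longrightarrow> le (G {a, b}) (G {a', b'})"
  unfolding mono_fam_def by (drule spec[of _ "{(a, a'), (b, b')}"]) auto

lemma monoI: "mono_fam le G \<Longrightarrow> (\<And>t. P t \<Longrightarrow> le (h t) (h' t)) \<Longrightarrow>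
   le (G {h t | t. P t}) (G {h' t | t. P t})"
proof -
  assume m: "mono_fam le G" and h: "\<And>t. P t \<Longrightarrow> le (h t) (h' t)"
  define R where "R = (\<lambda>t. (h t, h' t)) ` Collect P"
  have "\<forall>(x, y)\<in>R. le x y" using h unfolding R_def by auto
  then have "le (G (fst ` R)) (G (snd ` R))" using m unfolding mono_fam_def by blast
  moreover have "fst ` R = {h t | t. P t}" "snd ` R = {h' t | t. P t}"
    unfolding R_def image_image by auto
  ultimately show ?thesis by simp
qed

locale stdb =
  fixes B :: "'b bilattice"
  assumes std: "std_bilattice B"
begin

lemma tc: "complete_lattice_rel (tle B)" and kc: "complete_lattice_rel (kle B)"
  and neg: "is_negation B" and il: "infinitely_interlaced B"
  using std unfolding std_bilattice_def by blast+

lemma kpo: "partial_order_rel (kle B)" and tpo: "partial_order_rel (tle B)"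
  using tc kc unfolding complete_lattice_rel_def by blast+

lemma mf: "mono_fam (tle B) (tMeet B)" "mono_fam (tle B) (tJoin B)"
  "mono_fam (tle B) (kMeet B)" "mono_fam (tle B) (kJoin B)"
  "mono_fam (kle B) (tMeet B)" "mono_fam (kle B) (tJoin B)"
  "mono_fam (kle B) (kMeet B)" "mono_fam (kle B) (kJoin B)"
  using il unfolding infinitely_interlaced_def by blast+

lemma ceval_kmono:
  "vle (kle B) v v' \<Longrightarrow> vle (kle B) w w' \<Longrightarrow> kle B (ceval B v w e \<phi>) (ceval B v' w' e \<phi>)"
proof (induction \<phi> arbitrary: e)
  case (NegLit p ts)
  then show ?case using neg unfolding is_negation_def vle_def by simp
next
  case (Conj a b) then show ?case using mono2[OF mf(5)] by (simp add: tmeet_def)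
next
  case (Disj a b) then show ?case using mono2[OF mf(6)] by (simp add: tjoin_def)
next
  case (KMeetF a b) then show ?case using mono2[OF mf(7)] by (simp add: kmeet_def)
next
  case (KJoinF a b) then show ?case using mono2[OF mf(8)] by (simp add: kjoin_def)
next
  case (Ex x a) then show ?case by (simp, intro monoI[OF mf(6)]) auto
next
  case (All x a) then show ?case by (simp, intro monoI[OF mf(5)]) auto
qed (auto simp: vle_def po_refl[OF kpo])

lemma ceval_tmono:
  "vle (tle B) v v' \<Longrightarrow> tle B (ceval B v w e \<phi>) (ceval B v' w e \<phi>)"
proof (induction \<phi> arbitrary: e)
  case (Conj a b) then show ?case using mono2[OF mf(1)] by (simp add: tmeet_def)
next
  case (Disj a b) then show ?case using mono2[OF mf(2)] by (simp add: tjoin_def)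
next
  case (KMeetF a b) then show ?case using mono2[OF mf(3)] by (simp add: kmeet_def)
next
  case (KJoinF a b) then show ?case using mono2[OF mf(4)] by (simp add: kjoin_def)
next
  case (Ex x a) then show ?case by (simp, intro monoI[OF mf(2)]) auto
next
  case (All x a) then show ?case by (simp, intro monoI[OF mf(1)]) auto
qed (auto simp: vle_def po_refl[OF tpo])

lemma Psi_mono:
  assumes "\<And>e \<phi>. r (ceval B v w e \<phi>) (ceval B v' w' e \<phi>)" and "\<And>x. r x x"
  shows "vle r (Psi B P \<alpha> v w) (Psi B P \<alpha> v' w')"
  unfolding vle_def Psi_def using assms by (auto simp: split_def Let_def)

lemma Psi_kmono: "vle (kle B) v v' \<Longrightarrow> vle (kle B) w w' \<Longrightarrow>
    vle (kle B) (Psi B P \<alpha> v w) (Psi B P \<alpha> v' w')"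
  by (rule Psi_mono) (use ceval_kmono po_refl[OF kpo] in auto)

lemma vkrefl: "vle (kle B) v v" unfolding vle_def using po_refl[OF kpo] by blast

lemma Psi_kmono1: "vle (kle B) x y \<Longrightarrow> vle (kle B) (Psi B P \<alpha> x v) (Psi B P \<alpha> y v)"
  using Psi_kmono vkrefl by blast

lemma Psi_tmono: "vle (tle B) v v' \<Longrightarrow> vle (tle B) (Psi B P \<alpha> v w) (Psi B P \<alpha> v' w)"
  by (rule Psi_mono) (use ceval_tmono po_refl[OF tpo] in auto)

lemma bU_bot: "kle B (bU B) x"
  using complete_lub[OF kc, of "{}"] unfolding bU_def kJoin_def is_lub_def by blast

lemma Psi_U: "vle (kle B) (Psi B P CU v w) (Psi B P \<alpha> v w)"
  unfolding vle_def Psi_def by (auto simp: tval_of_def bU_bot po_refl[OF kpo])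

lemma kmeet_glb: "kle B x a \<Longrightarrow> kle B x b \<Longrightarrow> kle B x (kmeet B a b)"
  using complete_glb[OF kc, of "{a, b}"] unfolding kmeet_def kMeet_def is_glb_def by blast

lemma tJoin_eq: "tJoin B = lub (tle B)" and tMeet_eq: "tMeet B = glb (tle B)"
  and kJoin_eq: "kJoin B = lub (kle B)"
  by (auto simp: fun_eq_iff tJoin_def tMeet_def kJoin_def)

lemma gfp_flip: "greatest_fp le f = least_fp (\<lambda>x y. le y x) f"
  unfolding greatest_fp_def least_fp_def by simp

lemma PsiF: assumes vv: "vle (kle B) v v'" shows
   "Psi B P CF (Psi' B P CF v) v = Psi' B P CF v \<and>
   (\<forall>z. vle (tle B) (Psi B P CF z v) z \<longrightarrow> vle (tle B) (Psi' B P CF v) z) \<and>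
   vle (kle B) (Psi' B P CF v) (Psi' B P CF v')"
proof -
  have K: "\<And>x y. vle (kle B) x y \<Longrightarrow> vle (kle B) (Psi B P CF x v) (Psi B P CF y v')"
    using Psi_kmono vv by blast
  have X: "(\<lambda>x. Psi B P CF x v) (least_fp (vle (tle B)) (\<lambda>x. Psi B P CF x v)) = least_fp (vle (tle B)) (\<lambda>x. Psi B P CF x v) \<and>
    (\<forall>z. (vle (tle B)) ((\<lambda>x. Psi B P CF x v) z) z \<longrightarrow> (vle (tle B)) (least_fp (vle (tle B)) (\<lambda>x. Psi B P CF x v)) z) \<and>
    (\<lambda>x. Psi B P CF x v') (least_fp (vle (tle B)) (\<lambda>x. Psi B P CF x v')) = least_fp (vle (tle B)) (\<lambda>x. Psi B P CF x v') \<and>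
    (\<forall>z. (vle (tle B)) ((\<lambda>x. Psi B P CF x v') z) z \<longrightarrow> (vle (tle B)) (least_fp (vle (tle B)) (\<lambda>x. Psi B P CF x v')) z) \<and>
    vle (kle B) (least_fp (vle (tle B)) (\<lambda>x. Psi B P CF x v)) (least_fp (vle (tle B)) (\<lambda>x. Psi B P CF x v'))"
    apply (rule lfp_gen[where le="vle (tle B)" and f="\<lambda>x. Psi B P CF x v" and g="\<lambda>x. Psi B P CF x v'"])
    apply (rule vpo[OF tpo])
    apply (rule vlub[OF tc])
    apply (erule Psi_tmono)
    apply (erule Psi_tmono)
    apply (erule K)
    apply (erule vkL[OF mf(6)[unfolded tJoin_eq]])
    done
  show ?thesis unfolding Psi'_def tval.case  using X by blast
qed

lemma PsiT: assumes vv: "vle (kle B) v v'" shows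
   "Psi B P CT (Psi' B P CT v) v = Psi' B P CT v \<and>
   (\<forall>z. vle (tle B) z (Psi B P CT z v) \<longrightarrow> vle (tle B) z (Psi' B P CT v)) \<and>
   vle (kle B) (Psi' B P CT v) (Psi' B P CT v')"
proof -
  have K: "\<And>x y. vle (kle B) x y \<Longrightarrow> vle (kle B) (Psi B P CT x v) (Psi B P CT y v')"
    using Psi_kmono vv by blast
  have X: "(\<lambda>x. Psi B P CT x v) (least_fp (\<lambda>x y. vle (tle B) y x) (\<lambda>x. Psi B P CT x v)) = least_fp (\<lambda>x y. vle (tle B) y x) (\<lambda>x. Psi B P CT x v) \<and>
    (\<forall>z. (\<lambda>x y. vle (tle B) y x) ((\<lambda>x. Psi B P CT x v) z) z \<longrightarrow> (\<lambda>x y. vle (tle B) y x) (least_fp (\<lambda>x y. vle (tle B) y x) (\<lambda>x. Psi B P CT x v)) z) \<and>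
    (\<lambda>x. Psi B P CT x v') (least_fp (\<lambda>x y. vle (tle B) y x) (\<lambda>x. Psi B P CT x v')) = least_fp (\<lambda>x y. vle (tle B) y x) (\<lambda>x. Psi B P CT x v') \<and>
    (\<forall>z. (\<lambda>x y. vle (tle B) y x) ((\<lambda>x. Psi B P CT x v') z) z \<longrightarrow> (\<lambda>x y. vle (tle B) y x) (least_fp (\<lambda>x y. vle (tle B) y x) (\<lambda>x. Psi B P CT x v')) z) \<and>
    vle (kle B) (least_fp (\<lambda>x y. vle (tle B) y x) (\<lambda>x. Psi B P CT x v)) (least_fp (\<lambda>x y. vle (tle B) y x) (\<lambda>x. Psi B P CT x v'))"
    apply (rule lfp_gen[where le="\<lambda>x y. vle (tle B) y x" and f="\<lambda>x. Psi B P CT x v" and g="\<lambda>x. Psi B P CT x v'"])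
    apply (rule vpo_flip[OF vpo[OF tpo]])
    apply (rule vglb[OF tc])
    apply (erule Psi_tmono)
    apply (erule Psi_tmono)
    apply (erule K)
    apply (erule vkL[OF mf(5)[unfolded tMeet_eq]])
    done
  show ?thesis unfolding Psi'_def tval.case gfp_flip using X by blast
qed

lemma PsiU: assumes vv: "vle (kle B) v v'" shows
   "Psi B P CU (Psi' B P CU v) v = Psi' B P CU v \<and>
   (\<forall>z. vle (kle B) (Psi B P CU z v) z \<longrightarrow> vle (kle B) (Psi' B P CU v) z) \<and>
   vle (kle B) (Psi' B P CU v) (Psi' B P CU v')"
proof -
  have K: "\<And>x y. vle (kle B) x y \<Longrightarrow> vle (kle B) (Psi B P CU x v) (Psi B P CU y v')"
    using Psi_kmono vv by blast
  have X: "(\<lambda>x. Psi B P CU x v) (least_fp (vle (kle B)) (\<lambda>x. Psi B P CU x v)) = least_fp (vle (kle B)) (\<lambda>x. Psi B P CU x v) \<and>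
    (\<forall>z. (vle (kle B)) ((\<lambda>x. Psi B P CU x v) z) z \<longrightarrow> (vle (kle B)) (least_fp (vle (kle B)) (\<lambda>x. Psi B P CU x v)) z) \<and>
    (\<lambda>x. Psi B P CU x v') (least_fp (vle (kle B)) (\<lambda>x. Psi B P CU x v')) = least_fp (vle (kle B)) (\<lambda>x. Psi B P CU x v') \<and>
    (\<forall>z. (vle (kle B)) ((\<lambda>x. Psi B P CU x v') z) z \<longrightarrow> (vle (kle B)) (least_fp (vle (kle B)) (\<lambda>x. Psi B P CU x v')) z) \<and>
    vle (kle B) (least_fp (vle (kle B)) (\<lambda>x. Psi B P CU x v)) (least_fp (vle (kle B)) (\<lambda>x. Psi B P CU x v'))"
    apply (rule lfp_gen[where le="vle (kle B)" and f="\<lambda>x. Psi B P CU x v" and g="\<lambda>x. Psi B P CU x v'"])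
    apply (rule vpo[OF kpo])
    apply (rule vlub[OF kc])
    apply (erule Psi_kmono1)
    apply (erule Psi_kmono1)
    apply (erule K)
    apply (erule vkL[OF mf(8)[unfolded kJoin_eq]])
    done
  show ?thesis unfolding Psi'_def tval.case  using X by blast
qed

lemma Psi'_kmono: assumes a: "\<alpha> \<noteq> CI" and vv: "vle (kle B) v v'"
  shows "vle (kle B) (Psi' B P \<alpha> v) (Psi' B P \<alpha> v')"
proof (cases \<alpha>)
  case CF then show ?thesis using PsiF[OF vv, where P=P] by (elim conjE) simp
next
  case CT then show ?thesis using PsiT[OF vv, where P=P] by (elim conjE) simp
next
  case CU then show ?thesis using PsiU[OF vv, where P=P] by (elim conjE) simp
next
  case CI then show ?thesis using a by simp
qed

lemma Fix: assumes a: "\<alpha> \<noteq> CI" shows "Psi' B P \<alpha> (FixU B P \<alpha>) = FixU B P \<alpha> \<and>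
   (\<forall>z. vle (kle B) (Psi' B P \<alpha> z) z \<longrightarrow> vle (kle B) (FixU B P \<alpha>) z)"
proof -
  have X: "Psi' B P \<alpha> (least_fp (vle (kle B)) (Psi' B P \<alpha>)) = least_fp (vle (kle B)) (Psi' B P \<alpha>) \<and>
    (\<forall>z. vle (kle B) (Psi' B P \<alpha> z) z \<longrightarrow> vle (kle B) (least_fp (vle (kle B)) (Psi' B P \<alpha>)) z) \<and>
    Psi' B P \<alpha> (least_fp (vle (kle B)) (Psi' B P \<alpha>)) = least_fp (vle (kle B)) (Psi' B P \<alpha>) \<and>
    (\<forall>z. vle (kle B) (Psi' B P \<alpha> z) z \<longrightarrow> vle (kle B) (least_fp (vle (kle B)) (Psi' B P \<alpha>)) z) \<and>
    vle (kle B) (least_fp (vle (kle B)) (Psi' B P \<alpha>)) (least_fp (vle (kle B)) (Psi' B P \<alpha>))"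
    apply (rule lfp_gen[where le="vle (kle B)" and k="vle (kle B)" and f="Psi' B P \<alpha>" and g="Psi' B P \<alpha>"])
    apply (rule vpo[OF kpo])
    apply (rule vlub[OF kc])
    apply (erule Psi'_kmono[OF a])
    apply (erule Psi'_kmono[OF a])
    apply (erule Psi'_kmono[OF a])
    apply (erule vkL[OF mf(8)[unfolded kJoin_eq]])
    done
  show ?thesis unfolding FixU_def using X by blast
qed

lemma main: "\<alpha> \<in> {CF, CT} \<Longrightarrow> vle (kle B) (FixU B P CU) (FixU B P \<alpha>)"
proof -
  assume a: "\<alpha> \<in> {CF, CT}"
  then have aI: "\<alpha> \<noteq> CI" by blast
  define \<Phi> where "\<Phi> = FixU B P \<alpha>"
  have fix1: "Psi' B P \<alpha> \<Phi> = \<Phi>" using Fix[OF aI, where P=P] unfolding \<Phi>_def by (elim conjE)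
  have "Psi B P \<alpha> \<Phi> \<Phi> = \<Phi>"
  proof (cases "\<alpha> = CF")
    case True
    have "Psi B P CF (Psi' B P CF \<Phi>) \<Phi> = Psi' B P CF \<Phi>" using PsiF[OF vkrefl, where P=P and v=\<Phi>] by (elim conjE)
    then show ?thesis using fix1 True by simp
  next
    case False then have T: "\<alpha> = CT" using a by blast
    have "Psi B P CT (Psi' B P CT \<Phi>) \<Phi> = Psi' B P CT \<Phi>" using PsiT[OF vkrefl, where P=P and v=\<Phi>] by (elim conjE)
    then show ?thesis using fix1 T by simp
  qed
  then have "vle (kle B) (Psi B P CU \<Phi> \<Phi>) \<Phi>" using Psi_U[where P=P and v=\<Phi> and w=\<Phi> and \<alpha>=\<alpha>] by simp
  moreover have "\<forall>z. vle (kle B) (Psi B P CU z \<Phi>) z \<longrightarrow> vle (kle B) (Psi' B P CU \<Phi>) z"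
    using PsiU[OF vkrefl, where P=P and v=\<Phi>] by (elim conjE)
  ultimately have "vle (kle B) (Psi' B P CU \<Phi>) \<Phi>" by blast
  moreover have "\<forall>z. vle (kle B) (Psi' B P CU z) z \<longrightarrow> vle (kle B) (FixU B P CU) z"
    using Fix[where \<alpha>=CU and P=P] by simp
  ultimately show ?thesis unfolding \<Phi>_def by blast
qed

end

theorem corollary1:
  fixes B :: "'b bilattice" and P :: "('p, 'f, 'b) clause set"
  assumes "std_bilattice B" and "fitting_program P"
  shows "vle (kle B) (FixU B P CU) (\<lambda>A. kmeet B (FixU B P CF A) (FixU B P CT A))"
proof -
  interpret stdb B using assms(1) by unfold_locales
  have 1: "vle (kle B) (FixU B P CU) (FixU B P CF)" by (rule main) simp
  have 2: "vle (kle B) (FixU B P CU) (FixU B P CT)" by (rule main) simp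
  show ?thesis unfolding vle_def
  proof
    fix A show "kle B (FixU B P CU A) (kmeet B (FixU B P CF A) (FixU B P CT A))"
      using 1 2 unfolding vle_def by (intro kmeet_glb) blast+
  qed
qed

end
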